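(* Fix a constant $c\ge1$. There is a constant $c''>0$ depending only on $c$ such that for all integers $n\ge3$, $U\ge3$ with $n/c\le U\le cn$, and all states $a,b$, the original chain $(s_t)$ satisfies $$\mathbb{P}\big(s_{4n}=b\mid s_1=a\big)\ge\frac{1}{c''n},$$ i.e. every entry of $K^{4n-1}$ is at least $\frac{1}{c''n}$, where $K$ is the transition matrix of the original chain.
   Context: Let $n\ge3$ and $U\ge3$ be integers. The "original chain" is the Markov chain on the $2n$ states $\{1,\dots,n,1',\dots,n'\}$ with the following transition probabilities (all unlisted transitions have probability $0$): for $2\le i\le n-1$: $i\to i$ w.p. $1/2$, $i\to i+1$ w.p. $\frac12(1-\frac1U)$, $i\to(i+1)'$ w.p. $\frac1{2U}$; for $2\le i\le n-1$: $i'\to i'$ w.p. $1/2$, $i'\to(i-1)'$ w.p. $\frac12(1-\frac1U)$, $i'\to i-1$ w.p. $\frac1{2U}$; $1\to2$ w.p. $1-\frac1U$, $1\to2'$ w.p. $\frac1U$; $1'\to1$ w.p. $1-\frac1U$, $1'\to1'$ w.p. $\frac1U$; $n\to n'$ w.p. $1-\frac1U$, $n\to n$ w.p. $\frac1U$; $n'\to(n-1)'$ w.p. $1-\frac1U$, $n'\to n-1$ w.p. $\frac1U$. *)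

theory Defs
  imports Complex_Main
begin

text \<open>States of the original chain: (False, i) encodes i, (True, i) encodes i',
  for 1 \<le> i \<le> n.\<close>

definition orig_states :: "nat \<Rightarrow> (bool \<times> nat) set" where
  "orig_states n = UNIV \<times> {1..n}"

definition orig_K :: "nat \<Rightarrow> real \<Rightarrow> bool \<times> nat \<Rightarrow> bool \<times> nat \<Rightarrow> real" where
  "orig_K n U x y =
    (case x of
      (False, i) \<Rightarrow>
        (if i = 1 then
           (if y = (False, 2) then 1 - 1/U else if y = (True, 2) then 1/U else 0)
         else if i = n then
           (if y = (True, n) then 1 - 1/U else if y = (False, n) then 1/U else 0)
         else if 2 \<le> i \<and> i \<le> n - 1 then
           (if y = (False, i) then 1/2
            else if y = (False, i + 1) then (1 - 1/U) / 2
            else if y = (True, i + 1) then 1 / (2 * U) else 0)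
         else 0)
    | (True, i) \<Rightarrow>
        (if i = 1 then
           (if y = (False, 1) then 1 - 1/U else if y = (True, 1) then 1/U else 0)
         else if i = n then
           (if y = (True, n - 1) then 1 - 1/U else if y = (False, n - 1) then 1/U else 0)
         else if 2 \<le> i \<and> i \<le> n - 1 then
           (if y = (True, i) then 1/2
            else if y = (True, i - 1) then (1 - 1/U) / 2
            else if y = (False, i - 1) then 1 / (2 * U) else 0)
         else 0))"

fun orig_Kpow :: "nat \<Rightarrow> real \<Rightarrow> nat \<Rightarrow> bool \<times> nat \<Rightarrow> bool \<times> nat \<Rightarrow> real" where
  "orig_Kpow n U 0 x y = (if x = y then 1 else 0)"
| "orig_Kpow n U (Suc m) x y = (\<Sum>z\<in>orig_states n. orig_K n U x z * orig_Kpow n U m z y)"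

end

theory Submission
  imports Defs
begin


lemma if_nonneg: "(P \<Longrightarrow> 0 \<le> (a::real)) \<Longrightarrow> (\<not>P \<Longrightarrow> 0 \<le> b) \<Longrightarrow> 0 \<le> (if P then a else b)"
  by auto

lemma K_nonneg:
  assumes "U \<ge> 1"
  shows "orig_K n U x z \<ge> 0"
proof -
  have f: "0 \<le> 1/U" "0 \<le> 1 - 1/U" "0 \<le> (1-1/U)/2" "0 \<le> 1/(2*U)" "0 \<le> (1::real)/2" using assms by (auto simp: field_simps)
  obtain b i where x: "x = (b,i)" by fastforce
  show ?thesis unfolding orig_K_def x
    by (cases b; simp only: prod.case bool.case; intro if_nonneg order_refl f)
qed

lemma Kpow_nonneg:
  assumes "U \<ge> 1"
  shows "orig_Kpow n U m x y \<ge> 0"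
proof (induction m arbitrary: x)
  case 0 then show ?case by simp
next
  case (Suc m)
  show ?case by (simp, intro sum_nonneg mult_nonneg_nonneg K_nonneg[OF assms] Suc)
qed

lemma Kpow_add:
  assumes "x \<in> orig_states n"
  shows "orig_Kpow n U (m1 + m2) x y = (\<Sum>z\<in>orig_states n. orig_Kpow n U m1 x z * orig_Kpow n U m2 z y)"
  using assms
proof (induction m1 arbitrary: x)
  case 0
  have fin: "finite (orig_states n)" by (simp add: orig_states_def)
  have "(\<Sum>z\<in>orig_states n. orig_Kpow n U 0 x z * orig_Kpow n U m2 z y)
        = (\<Sum>z\<in>orig_states n. if z = x then orig_Kpow n U m2 z y else 0)"
    by (rule sum.cong) auto
  also have "\<dots> = orig_Kpow n U m2 x y" using fin 0 by (simp add: sum.delta')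
  finally show ?case by simp
next
  case (Suc m1)
  have "orig_Kpow n U (Suc m1 + m2) x y = (\<Sum>w\<in>orig_states n. orig_K n U x w *
      (\<Sum>z\<in>orig_states n. orig_Kpow n U m1 w z * orig_Kpow n U m2 z y))"
    using Suc.IH by simp
  also have "\<dots> = (\<Sum>w\<in>orig_states n. \<Sum>z\<in>orig_states n. orig_K n U x w * orig_Kpow n U m1 w z * orig_Kpow n U m2 z y)"
    by (simp add: sum_distrib_left mult.assoc)
  also have "\<dots> = (\<Sum>z\<in>orig_states n. \<Sum>w\<in>orig_states n. orig_K n U x w * orig_Kpow n U m1 w z * orig_Kpow n U m2 z y)"
    by (rule sum.swap)
  also have "\<dots> = (\<Sum>z\<in>orig_states n. orig_Kpow n U (Suc m1) x z * orig_Kpow n U m2 z y)"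
    by (simp add: sum_distrib_right)
  finally show ?case .
qed

lemma Kpow_step_right:
  assumes "x \<in> orig_states n" "z \<in> orig_states n" "y \<in> orig_states n" "U \<ge> 1"
  shows "orig_Kpow n U (m + 1) x y \<ge> orig_Kpow n U m x z * orig_K n U z y"
proof -
  have fin: "finite (orig_states n)" by (simp add: orig_states_def)
  have nn: "\<And>w. orig_Kpow n U m x w * orig_Kpow n U 1 w y \<ge> 0"
    by (intro mult_nonneg_nonneg Kpow_nonneg[OF assms(4)])
  have "orig_Kpow n U m x z * orig_Kpow n U 1 z y \<le> (\<Sum>w\<in>orig_states n. orig_Kpow n U m x w * orig_Kpow n U 1 w y)"
    by (rule member_le_sum[OF assms(2)]) (use nn fin in auto)
  also have "\<dots> = orig_Kpow n U (m + 1) x y" by (rule Kpow_add[OF assms(1), symmetric])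
  finally have "orig_Kpow n U m x z * orig_Kpow n U 1 z y \<le> orig_Kpow n U (m + 1) x y" .
  moreover have "orig_Kpow n U 1 z y = orig_K n U z y"
  proof -
    have "orig_Kpow n U 1 z y = (\<Sum>w\<in>orig_states n. orig_K n U z w * (if w = y then 1 else 0))" by simp
    also have "\<dots> = (\<Sum>w\<in>orig_states n. if w = y then orig_K n U z w else 0)"
      by (rule sum.cong) auto
    also have "\<dots> = orig_K n U z y"
      using fin assms(3) by (simp add: sum.delta')
    finally show ?thesis .
  qed
  ultimately show ?thesis by simp
qed



locale ch =
  fixes n :: nat and U :: real
  assumes n3: "n \<ge> 3" and U3: "U \<ge> 3"
begin

definition q where "q = 1 - 1/U"
definition st :: "nat \<Rightarrow> bool \<times> nat" where
  "st p = (if p mod (2*n) < n then (False, p mod (2*n) + 1) else (True, 2*n - p mod (2*n)))"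
definition bnd :: "nat \<Rightarrow> bool" where
  "bnd p \<longleftrightarrow> p mod (2*n) = 0 \<or> p mod (2*n) = n - 1 \<or> p mod (2*n) = n \<or> p mod (2*n) = 2*n - 1"
definition hh :: "nat \<Rightarrow> real" where "hh p = (if bnd p then 1 else 1/2)"
definition hold :: "nat \<Rightarrow> real" where "hold p = (if bnd p then 0 else 1/2)"
definition rf :: "nat \<Rightarrow> nat" where "rf x = 2*n - 1 - x mod (2*n)"

abbreviation K where "K \<equiv> orig_K n U"

lemma K_F1: "K (False,1) y = (if y = (False,2) then q else if y = (True,2) then 1/U else 0)"
  using n3 unfolding orig_K_def q_def by simp
lemma K_Fi: "2 \<le> i \<Longrightarrow> i \<le> n - 1 \<Longrightarrow> K (False,i) y =
   (if y = (False, i) then 1/2 else if y = (False, i + 1) then q / 2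
            else if y = (True, i + 1) then 1 / (2 * U) else 0)"
proof -
  assume "2 \<le> i" "i \<le> n - 1"
  then have "i \<noteq> 1" "i \<noteq> n" "2 \<le> i \<and> i \<le> n - 1" using n3 by auto
  then show ?thesis unfolding orig_K_def q_def by simp
qed
lemma K_Fn: "K (False,n) y = (if y = (True, n) then q else if y = (False, n) then 1/U else 0)"
  using n3 unfolding orig_K_def q_def by simp
lemma K_B1: "K (True,1) y = (if y = (False, 1) then q else if y = (True, 1) then 1/U else 0)"
  using n3 unfolding orig_K_def q_def by simp
lemma K_Bi: "2 \<le> i \<Longrightarrow> i \<le> n - 1 \<Longrightarrow> K (True,i) y =
   (if y = (True, i) then 1/2 else if y = (True, i - 1) then q / 2
            else if y = (False, i - 1) then 1 / (2 * U) else 0)"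
proof -
  assume "2 \<le> i" "i \<le> n - 1"
  then have "i \<noteq> 1" "i \<noteq> n" "2 \<le> i \<and> i \<le> n - 1" using n3 by auto
  then show ?thesis unfolding orig_K_def q_def by simp
qed
lemma K_Bn: "K (True,n) y = (if y = (True, n - 1) then q else if y = (False, n - 1) then 1/U else 0)"
  using n3 unfolding orig_K_def q_def by simp

lemma st_mod: "st (p mod (2*n)) = st p"
  unfolding st_def by simp
lemma bnd_mod: "bnd (p mod (2*n)) = bnd p"
  unfolding bnd_def by simp

lemma rf_lt: "rf x < 2*n" using n3 unfolding rf_def by simp

lemma K_facts:
  "K (st p) (st (p+1)) = hh p * q \<and> K (st p) (st (rf (p+1))) = hh p / U \<and>
   (\<not> bnd p \<longrightarrow> K (st p) (st p) = 1/2)"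
proof -
  define r where "r = p mod (2*n)"
  have r: "r < 2*n" using n3 unfolding r_def by simp
  have p1: "(p+1) mod (2*n) = (if r = 2*n-1 then 0 else r+1)"
    using n3 r unfolding r_def by (auto simp: mod_Suc)
  have stp: "st p = (if r < n then (False, r + 1) else (True, 2*n - r))" unfolding st_def r_def by simp
  have stq: "st x = (if x mod (2*n) < n then (False, x mod (2*n) + 1) else (True, 2*n - x mod (2*n)))" for x
    unfolding st_def by simp
  have bp: "bnd p \<longleftrightarrow> r = 0 \<or> r = n - 1 \<or> r = n \<or> r = 2*n - 1" unfolding bnd_def r_def by simp
  have stv: "x < 2*n \<Longrightarrow> st x = (if x < n then (False, x + 1) else (True, 2*n - x))" for x
    unfolding st_def by simp
  have rfv: "rf (p+1) = 2*n - 1 - (p+1) mod (2*n)" unfolding rf_def by simp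
  consider "r = 0" | "1 \<le> r \<and> r \<le> n - 2" | "r = n - 1" | "r = n" | "n + 1 \<le> r \<and> r \<le> 2*n - 2" | "r = 2*n-1"
    using r n3 by linarith
  then show ?thesis
  proof cases
    case 1
    have s: "(p+1) mod (2*n) = 1" using 1 p1 n3 by simp
    have a: "st p = (False,1)" using 1 stp n3 by simp
    have b: "st (p+1) = (False,2)" using s n3 stq[of "p+1"] by simp
    have c: "st (rf (p+1)) = (True,2)" using s n3 stv[of "rf (p+1)"] rfv by simp
    show ?thesis using 1 bp n3 unfolding a b c K_F1 hh_def by simp
  next
    case 2
    have s: "(p+1) mod (2*n) = r+1" using 2 p1 n3 by (simp split: if_split_asm)
    have rl: "r < n" "r + 1 < n" using 2 n3 by linarith+
    have a: "st p = (False,r+1)" using rl stp by simp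
    have b: "st (p+1) = (False,r+2)" using s rl stq[of "p+1"] by simp
    have rr: "rf (p+1) = 2*n - 2 - r" "n \<le> 2*n - 2 - r" "2*n - 2 - r < 2*n" using rfv s 2 n3 by auto
    have c: "st (rf (p+1)) = (True,r+2)" using rr stv[of "rf (p+1)"] 2 n3 by simp
    have nb: "\<not> bnd p" using 2 bp n3 by auto
    have i2: "2 \<le> r+1" "r+1 \<le> n-1" using 2 n3 by linarith+
    show ?thesis using nb unfolding a b c K_Fi[OF i2] hh_def by auto
  next
    case 3
    have s: "(p+1) mod (2*n) = n" using 3 p1 n3 by (simp split: if_split_asm)
    have a: "st p = (False,n)" using 3 stp n3 by simp
    have b: "st (p+1) = (True,n)" using s n3 stq[of "p+1"] by simp
    have rr: "rf (p+1) = n - 1" using rfv s n3 by auto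
    have c: "st (rf (p+1)) = (False,n)" using rr stv[of "rf (p+1)"] n3 by simp
    show ?thesis using 3 bp n3 unfolding a b c K_Fn hh_def by simp
  next
    case 4
    have s: "(p+1) mod (2*n) = n+1" using 4 p1 n3 by (simp split: if_split_asm)
    have a: "st p = (True,n)" using 4 stp n3 by simp
    have b: "st (p+1) = (True,n-1)" using s n3 stv[of "(p+1) mod (2*n)"] st_mod[of "p+1"] by simp
    have rr: "rf (p+1) = n - 2" using rfv s n3 by auto
    have c: "st (rf (p+1)) = (False,n-1)" using rr stv[of "rf (p+1)"] n3 by simp
    show ?thesis using 4 bp n3 unfolding a b c K_Bn hh_def by simp
  next
    case 5
    define i where "i = 2*n - r"
    have i: "2 \<le> i" "i \<le> n - 1" using 5 unfolding i_def by auto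
    have s: "(p+1) mod (2*n) = r+1" using 5 p1 n3 by (simp split: if_split_asm)
    have a: "st p = (True,i)" using 5 stp n3 unfolding i_def by simp
    have "r + 1 < 2*n" using 5 n3 by linarith
    then have b: "st (p+1) = (True,i-1)" using s 5 n3 stv[of "(p+1) mod (2*n)"] st_mod[of "p+1"] unfolding i_def by simp
    have rr: "rf (p+1) = i - 2" "i - 2 < n" using rfv s 5 n3 unfolding i_def by auto
    have c: "st (rf (p+1)) = (False,i-1)" using rr stv[of "rf (p+1)"] i n3 by simp
    have nb: "\<not> bnd p" using 5 bp n3 by auto
    show ?thesis using i nb unfolding a b c K_Bi[OF i] hh_def by auto
  next
    case 6
    have s: "(p+1) mod (2*n) = 0" using 6 p1 n3 by simp
    have a: "st p = (True,1)" using 6 stp n3 by simp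
    have b: "st (p+1) = (False,1)" using s n3 stq[of "p+1"] by simp
    have rr: "rf (p+1) = 2*n-1" using rfv s n3 by auto
    have c: "st (rf (p+1)) = (True,1)" using rr stv[of "rf (p+1)"] n3 by simp
    show ?thesis using 6 bp n3 unfolding a b c K_B1 hh_def by simp
  qed
qed


lemma st_in: "st p \<in> orig_states n"
proof -
  have "p mod (2*n) < 2*n" using n3 by simp
  then show ?thesis unfolding st_def orig_states_def by auto
qed

lemma st_eq: "st x = st y \<Longrightarrow> x mod (2*n) = y mod (2*n)"
proof -
  assume "st x = st y"
  moreover have "x mod (2*n) < 2*n" "y mod (2*n) < 2*n" using n3 by simp_all
  ultimately show ?thesis unfolding st_def by (auto split: if_split_asm)
qed

lemma st_surj: "a \<in> orig_states n \<Longrightarrow> \<exists>p<2*n. st a' = st a' \<and> st p = a"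
proof -
  assume "a \<in> orig_states n"
  then obtain b i where a: "a = (b,i)" "1 \<le> i" "i \<le> n" unfolding orig_states_def by auto
  show ?thesis
  proof (cases b)
    case False
    have "st (i-1) = a" using a False unfolding st_def by simp
    then show ?thesis using a by (intro exI[of _ "i-1"]) auto
  next
    case True
    have "st (2*n-i) = a" using a True unfolding st_def by simp
    then show ?thesis using a by (intro exI[of _ "2*n-i"]) auto
  qed
qed

lemma Kpow_nn: "orig_Kpow n U m x y \<ge> 0"
  using Kpow_nonneg U3 by simp

lemma one_step:
  "orig_Kpow n U (Suc m) (st p) y \<ge> hold p * orig_Kpow n U m (st p) y
     + hh p * q * orig_Kpow n U m (st (p+1)) y + hh p / U * orig_Kpow n U m (st (rf (p+1))) y"
proof -
  let ?f = "\<lambda>z. K (st p) z * orig_Kpow n U m z y"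
  have fin: "finite (orig_states n)" by (simp add: orig_states_def)
  have nn: "\<And>z. ?f z \<ge> 0" using K_nonneg[of U] U3 Kpow_nn by (simp add: mult_nonneg_nonneg)
  have S: "orig_Kpow n U (Suc m) (st p) y = sum ?f (orig_states n)" by simp
  have Kf: "K (st p) (st (p+1)) = hh p * q" "K (st p) (st (rf (p+1))) = hh p / U"
    using K_facts by auto
  define s where "s = (p+1) mod (2*n)"
  have s2: "s < 2*n" using n3 unfolding s_def by simp
  have rfm: "rf (p+1) mod (2*n) = 2*n - 1 - s" using rf_lt unfolding rf_def s_def by simp
  have d1: "st (p+1) \<noteq> st (rf (p+1))"
  proof
    assume "st (p+1) = st (rf (p+1))"
    then have "s = 2*n - 1 - s" using st_eq rfm unfolding s_def by metis
    then show False using s2 by presburger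
  qed
  show ?thesis
  proof (cases "bnd p")
    case True
    have "sum ?f {st (p+1), st (rf (p+1))} \<le> sum ?f (orig_states n)"
      by (rule sum_mono2[OF fin]) (use st_in nn in auto)
    moreover have "sum ?f {st (p+1), st (rf (p+1))} = hh p * q * orig_Kpow n U m (st (p+1)) y + hh p / U * orig_Kpow n U m (st (rf (p+1))) y"
      using d1 Kf by simp
    ultimately show ?thesis using True S unfolding hold_def by simp
  next
    case False
    define r where "r = p mod (2*n)"
    have r2: "r < 2*n" using n3 unfolding r_def by simp
    have nb: "r \<noteq> 0" "r \<noteq> n - 1" "r \<noteq> n" "r \<noteq> 2*n-1" using False unfolding bnd_def r_def by auto
    have sr: "s = r + 1" using nb r2 unfolding s_def r_def by (simp add: mod_Suc)
    have d2: "st p \<noteq> st (p+1)"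
    proof
      assume "st p = st (p+1)"
      then have "r = s" using st_eq unfolding s_def r_def by metis
      then show False using sr by simp
    qed
    have d3: "st p \<noteq> st (rf (p+1))"
    proof
      assume "st p = st (rf (p+1))"
      then have "r = 2*n - 1 - s" using st_eq rfm unfolding r_def by metis
      then show False using sr nb r2 by linarith
    qed
    have Kh: "K (st p) (st p) = 1/2" using K_facts False by auto
    have "sum ?f {st p, st (p+1), st (rf (p+1))} \<le> sum ?f (orig_states n)"
      by (rule sum_mono2[OF fin]) (use st_in nn in auto)
    moreover have "sum ?f {st p, st (p+1), st (rf (p+1))} = 1/2 * orig_Kpow n U m (st p) y + hh p * q * orig_Kpow n U m (st (p+1)) y + hh p / U * orig_Kpow n U m (st (rf (p+1))) y"
      using d1 d2 d3 Kf Kh by simp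
    ultimately show ?thesis using False S unfolding hold_def by simp
  qed
qed

end


context ch begin

definition beta :: "nat \<Rightarrow> nat \<Rightarrow> nat" where
  "beta p l = card {j. j < l \<and> bnd (p + j)}"

lemma beta_0[simp]: "beta p 0 = 0" unfolding beta_def by simp

lemma beta_Suc: "beta p (Suc l) = (if bnd p then 1 else 0) + beta (p+1) l"
proof -
  have e: "{j. j < Suc l \<and> bnd (p + j)} = (if bnd p then {0} else {}) \<union> Suc ` {j. j < l \<and> bnd (p + 1 + j)}"
    by (auto simp: image_iff less_Suc_eq_0_disj)
  have fin: "finite {j. j < l \<and> bnd (p + 1 + j)}" by simp
  have "card (Suc ` {j. j < l \<and> bnd (p + 1 + j)}) = card {j. j < l \<and> bnd (p + 1 + j)}"
    by (rule card_image) simp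
  moreover have "0 \<notin> Suc ` {j. j < l \<and> bnd (p + 1 + j)}" by auto
  ultimately show ?thesis unfolding beta_def e using fin by (auto simp: card_insert_if)
qed

lemma beta_le: "beta p l \<le> l"
proof -
  have "{j. j < l \<and> bnd (p + j)} \<subseteq> {..<l}" by auto
  then have "card {j. j < l \<and> bnd (p + j)} \<le> card {..<l}" by (intro card_mono) auto
  then show ?thesis unfolding beta_def by simp
qed

lemma beta_mono: "l1 \<le> l2 \<Longrightarrow> beta p l1 \<le> beta p l2"
  unfolding beta_def by (intro card_mono) auto

lemma beta_add: "beta p (l1 + l2) = beta p l1 + beta (p + l1) l2"
proof (induction l1 arbitrary: p)
  case 0 then show ?case by simp
next
  case (Suc l1)
  have "beta p (Suc l1 + l2) = (if bnd p then 1 else 0) + beta (p+1) (l1 + l2)"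
    using beta_Suc by simp
  also have "\<dots> = (if bnd p then 1 else 0) + beta (p+1) l1 + beta (p + 1 + l1) l2"
    using Suc.IH by simp
  also have "\<dots> = beta p (Suc l1) + beta (p + Suc l1) l2" using beta_Suc by simp
  finally show ?case .
qed

lemma beta_lap: "beta p (2*n) \<le> 4"
proof -
  let ?A = "{j. j < 2*n \<and> bnd (p + j)}"
  let ?f = "\<lambda>j. (p + j) mod (2*n)"
  have inj: "inj_on ?f ?A"
  proof
    fix x y assume "x \<in> ?A" "y \<in> ?A" "?f x = ?f y"
    then have xy: "x < 2*n" "y < 2*n" "(p + x) mod (2*n) = (p + y) mod (2*n)" by auto
    have aux: "a < 2*n \<Longrightarrow> b < 2*n \<Longrightarrow> a \<le> b \<Longrightarrow> (p + a) mod (2*n) = (p + b) mod (2*n) \<Longrightarrow> a = b" for a b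
    proof -
      assume h: "a < 2*n" "b < 2*n" "a \<le> b" "(p + a) mod (2*n) = (p + b) mod (2*n)"
      then have "2*n dvd (p + b) - (p + a)" using mod_eq_dvd_iff_nat[of "p+a" "p+b" "2*n"] by simp
      then have "2*n dvd b - a" by simp
      moreover have "b - a < 2*n" using h by simp
      ultimately have "b - a = 0" using dvd_imp_le by (metis not_less gr0I)
      then show "a = b" using h by simp
    qed
    show "x = y" using aux[of x y] aux[of y x] xy by (cases "x \<le> y") auto
  qed
  have sub: "?f ` ?A \<subseteq> {0, n - 1, n, 2*n - 1}" unfolding bnd_def by auto
  have "card ?A = card (?f ` ?A)" using card_image[OF inj] by simp
  also have "\<dots> \<le> card {0, n - 1, n, 2*n - 1}" by (rule card_mono[OF _ sub]) simp
  also have "\<dots> \<le> 4" using card_length[of "[0, n-1, n, 2*n-1]"] by simp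
  finally show ?thesis unfolding beta_def .
qed

lemma beta_4n: "l \<le> 4*n \<Longrightarrow> beta p l \<le> 8"
proof -
  assume "l \<le> 4*n"
  then have "beta p l \<le> beta p (2*n + 2*n)" by (intro beta_mono) simp
  also have "\<dots> = beta p (2*n) + beta (p + 2*n) (2*n)" by (rule beta_add)
  also have "\<dots> \<le> 8" using beta_lap[of p] beta_lap[of "p + 2*n"] by simp
  finally show ?thesis .
qed

end


lemma pascal_real:
  assumes "B \<le> l" "l \<le> m"
  shows "real (Suc m - B choose (Suc l - B)) / 2^(Suc m - B) =
    1/2 * (real (m - B choose (Suc l - B)) / 2^(m-B)) + 1/2 * (real (m - B choose (l - B)) / 2^(m - B))"
proof -
  have e: "Suc m - B = Suc (m - B)" "Suc l - B = Suc (l - B)" using assms by auto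
  show ?thesis unfolding e binomial_Suc_Suc by (simp add: field_simps)
qed

definition gen :: "real \<Rightarrow> nat \<Rightarrow> nat \<Rightarrow> nat \<Rightarrow> bool \<Rightarrow> real" where
  "gen w m B D r = (if D \<le> m \<and> r then w * (real ((m - B) choose (D - B)) / 2^(m - B)) else 0)"

lemma gen_bnd: "gen w (Suc m) (Suc B) (Suc D) r = gen w m B D r"
  unfolding gen_def by simp

lemma gen_int: assumes "B \<le> D" shows "gen w (Suc m) B (Suc D) r = 1/2 * gen w m B (Suc D) r + 1/2 * gen w m B D r"
proof (cases "D \<le> m \<and> r")
  case True
  have P: "real (Suc m - B choose (Suc D - B)) / 2^(Suc m - B) =
        1/2 * (real (m - B choose (Suc D - B)) / 2^(m-B)) + 1/2 * (real (m - B choose (D - B)) / 2^(m - B))"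
    using pascal_real[OF assms] True by simp
  have z: "\<not> Suc D \<le> m \<Longrightarrow> (m - B choose (Suc D - B)) = 0" using True assms by simp
  show ?thesis unfolding gen_def using True by (auto simp: P z field_simps)
next
  case False then show ?thesis unfolding gen_def by auto
qed

locale cht = ch +
  fixes t :: nat
  assumes t2: "t < 2*n" and tnb: "\<not> bnd t"
begin

definition bb :: "nat \<Rightarrow> nat \<Rightarrow> nat \<Rightarrow> real" where
  "bb m p l = (if l \<le> m \<and> (p + l) mod (2*n) = t then
      q^l * (real ((m - beta p l) choose (l - beta p l)) / 2^(m - beta p l)) else 0)"

definition cc :: "nat \<Rightarrow> nat \<Rightarrow> nat \<Rightarrow> nat \<Rightarrow> real" where
  "cc m p k l = (let B = beta p k + beta (rf (p+k)) l in
     if k + l \<le> m \<and> (rf (p + k) + l) mod (2*n) = t then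
      q^(k + l - 1) / U * (real ((m - B) choose (k + l - B)) / 2^(m - B)) else 0)"

lemma q_nn: "0 \<le> q" "q \<le> 1" using U3 unfolding q_def by (auto simp: field_simps)

lemma bb_nn: "0 \<le> bb m p l" unfolding bb_def using q_nn by simp
lemma cc_nn: "0 \<le> cc m p k l" unfolding cc_def Let_def using q_nn U3 by simp

lemma bb_rec0: "bb (Suc m) p 0 = hold p * bb m p 0"
proof (cases "p mod (2*n) = t")
  case True
  then have "\<not> bnd p" using tnb bnd_mod[of p] by simp
  then show ?thesis unfolding bb_def hold_def using True by simp
next
  case False then show ?thesis unfolding bb_def by simp
qed

lemma bb_rec: "bb (Suc m) p (Suc l) = hold p * bb m p (Suc l) + hh p * q * bb m (p+1) l"
proof -
  have res: "(p + Suc l) = (p + 1) + l" by simp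
  have bs: "beta p (Suc l) = (if bnd p then 1 else 0) + beta (p+1) l" by (rule beta_Suc)
  show ?thesis
  proof (cases "bnd p")
    case True
    then have bs': "beta p (Suc l) = Suc (beta (p+1) l)" using bs by simp
    have e1: "Suc m - Suc (beta (p+1) l) = m - beta (p+1) l" "Suc l - Suc (beta (p+1) l) = l - beta (p+1) l" by simp_all
    show ?thesis unfolding bb_def hold_def hh_def using True unfolding bs' e1 res by simp
  next
    case False
    then have bs': "beta p (Suc l) = beta (p+1) l" using bs by simp
    define B where "B = beta (p+1) l"
    have Bl: "B \<le> l" unfolding B_def by (rule beta_le)
    show ?thesis
    proof (cases "l \<le> m \<and> (p + 1 + l) mod (2*n) = t")
      case True
      have P: "real (Suc m - B choose (Suc l - B)) / 2^(Suc m - B) =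
        1/2 * (real (m - B choose (Suc l - B)) / 2^(m-B)) + 1/2 * (real (m - B choose (l - B)) / 2^(m - B))"
        using pascal_real[OF Bl] True by simp
      have z: "\<not> Suc l \<le> m \<Longrightarrow> (m - B choose (Suc l - B)) = 0" using True Bl by simp
      show ?thesis unfolding bb_def hold_def hh_def using False True
        unfolding bs' res B_def[symmetric] by (auto simp: P z field_simps)
    next
      case F2: False
      then show ?thesis unfolding bb_def hold_def hh_def using False unfolding bs' res by auto
    qed
  qed
qed


lemma cc_gen: "cc m p k l = gen (q^(k + l - 1) / U) m (beta p k + beta (rf (p+k)) l) (k + l) ((rf (p + k) + l) mod (2*n) = t)"
  unfolding cc_def gen_def Let_def by simp

lemma bb_gen: "bb m p l = gen (q^l) m (beta p l) l ((p + l) mod (2*n) = t)"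
  unfolding bb_def gen_def by simp

lemma gen_mult: "gen (a * w) m B D r = a * gen w m B D r"
  unfolding gen_def by simp

lemma cc_rec: assumes "k \<ge> 1"
  shows "cc (Suc m) p (Suc k) l = hold p * cc m p (Suc k) l + hh p * q * cc m (p+1) k l"
proof -
  have res: "p + Suc k = (p + 1) + k" by simp
  have bs: "beta p (Suc k) = (if bnd p then 1 else 0) + beta (p+1) k" by (rule beta_Suc)
  define B where "B = beta (p+1) k + beta (rf (p + 1 + k)) l"
  define r where "r = ((rf (p + 1 + k) + l) mod (2*n) = t)"
  have qq: "q^(Suc k + l - 1) / U = q * (q^(k + l - 1) / U)" using assms
    by (cases k) (auto simp: field_simps)
  have L: "cc (Suc m) p (Suc k) l = q * gen (q^(k + l - 1) / U) (Suc m) ((if bnd p then 1 else 0) + B) (Suc (k + l)) r"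
    unfolding cc_gen res bs B_def r_def qq gen_mult by (simp add: add.assoc)
  have R1: "cc m p (Suc k) l = q * gen (q^(k + l - 1) / U) m ((if bnd p then 1 else 0) + B) (Suc (k + l)) r"
    unfolding cc_gen res bs B_def r_def qq gen_mult by (simp add: add.assoc)
  have R2: "cc m (p+1) k l = gen (q^(k + l - 1) / U) m B (k + l) r"
    unfolding cc_gen B_def r_def by simp
  show ?thesis
  proof (cases "bnd p")
    case True
    show ?thesis unfolding L R1 R2 hold_def hh_def using True gen_bnd by simp
  next
    case False
    have "B \<le> k + l" unfolding B_def using beta_le[of "p+1" k] beta_le[of "rf (p+1+k)" l] by simp
    then show ?thesis unfolding L R1 R2 hold_def hh_def using False gen_int by (simp add: algebra_simps)
  qed
qed

lemma cc_rec1: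
  shows "cc (Suc m) p 1 l = hold p * cc m p 1 l + hh p / U * bb m (rf (p+1)) l"
proof -
  have bs: "beta p 1 = (if bnd p then 1 else 0)" using beta_Suc[of p 0] by simp
  define B where "B = beta (rf (p + 1)) l"
  define r where "r = ((rf (p + 1) + l) mod (2*n) = t)"
  have qq: "q^(1 + l - 1) / U = 1/U * q^l" by simp
  have L: "cc (Suc m) p 1 l = 1/U * gen (q^l) (Suc m) ((if bnd p then 1 else 0) + B) (Suc l) r"
    unfolding cc_gen bs B_def r_def qq gen_mult by simp
  have R1: "cc m p 1 l = 1/U * gen (q^l) m ((if bnd p then 1 else 0) + B) (Suc l) r"
    unfolding cc_gen bs B_def r_def qq gen_mult by simp
  have R2: "bb m (rf (p+1)) l = gen (q^l) m B l r"
    unfolding bb_gen B_def r_def by simp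
  show ?thesis
  proof (cases "bnd p")
    case True
    show ?thesis unfolding L R1 R2 hold_def hh_def using True gen_bnd by simp
  next
    case False
    have "B \<le> l" unfolding B_def by (rule beta_le)
    then show ?thesis unfolding L R1 R2 hold_def hh_def using False gen_int by (simp add: algebra_simps)
  qed
qed

end


context cht begin

definition SS where "SS M m p = (\<Sum>l<M. bb m p l)"
definition FF where "FF M m p = (\<Sum>k<M. \<Sum>l<M. cc m p (Suc k) l)"

lemma hold_nn: "0 \<le> hold p" unfolding hold_def by simp
lemma hh_nn: "0 \<le> hh p" unfolding hh_def by simp
lemma SS_nn: "0 \<le> SS M m p" unfolding SS_def by (intro sum_nonneg bb_nn)
lemma FF_nn: "0 \<le> FF M m p" unfolding FF_def by (intro sum_nonneg cc_nn)

lemma SS_rec: "SS M (Suc m) p \<le> hold p * SS M m p + hh p * q * SS M m (p+1)"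
proof (cases M)
  case 0 then show ?thesis unfolding SS_def by simp
next
  case (Suc M')
  have "SS M (Suc m) p = bb (Suc m) p 0 + (\<Sum>l<M'. bb (Suc m) p (Suc l))"
    unfolding SS_def Suc by (rule sum.lessThan_Suc_shift)
  also have "\<dots> = hold p * (bb m p 0 + (\<Sum>l<M'. bb m p (Suc l))) + hh p * q * (\<Sum>l<M'. bb m (p+1) l)"
    by (simp add: bb_rec0 bb_rec sum.distrib sum_distrib_left algebra_simps)
  also have "bb m p 0 + (\<Sum>l<M'. bb m p (Suc l)) = SS M m p"
    unfolding SS_def Suc by (rule sum.lessThan_Suc_shift[symmetric])
  also have "(\<Sum>l<M'. bb m (p+1) l) \<le> SS M m (p+1)"
    unfolding SS_def Suc by (rule sum_mono2) (auto intro: bb_nn)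
  finally show ?thesis using hh_nn[of p] q_nn by (simp add: mult_left_mono)
qed

lemma FF_rec: "FF M (Suc m) p \<le> hold p * FF M m p + hh p / U * SS M m (rf (p+1)) + hh p * q * FF M m (p+1)"
proof (cases M)
  case 0 then show ?thesis unfolding FF_def SS_def by simp
next
  case (Suc M')
  let ?g = "\<lambda>m p k. \<Sum>l<M. cc m p k l"
  have e1: "FF M (Suc m) p = ?g (Suc m) p 1 + (\<Sum>k<M'. ?g (Suc m) p (Suc (Suc k)))"
    unfolding FF_def Suc by (subst sum.lessThan_Suc_shift) simp
  have e2: "?g (Suc m) p 1 = hold p * ?g m p 1 + hh p / U * SS M m (rf (p+1))"
    unfolding SS_def cc_rec1 sum.distrib sum_distrib_left by simp
  have e3: "(\<Sum>k<M'. ?g (Suc m) p (Suc (Suc k))) = hold p * (\<Sum>k<M'. ?g m p (Suc (Suc k))) + hh p * q * (\<Sum>k<M'. ?g m (p+1) (Suc k))"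
    by (simp add: cc_rec sum.distrib sum_distrib_left)
  have e4: "?g m p 1 + (\<Sum>k<M'. ?g m p (Suc (Suc k))) = FF M m p"
    unfolding FF_def Suc by (subst sum.lessThan_Suc_shift) simp
  have "(\<Sum>k<M'. ?g m (p+1) (Suc k)) \<le> FF M m (p+1)"
    unfolding FF_def Suc by (rule sum_mono2) (auto intro!: sum_nonneg cc_nn add_nonneg_nonneg)
  then have e5: "hh p * q * (\<Sum>k<M'. ?g m (p+1) (Suc k)) \<le> hh p * q * FF M m (p+1)"
    using hh_nn[of p] q_nn by (simp add: mult_left_mono)
  have "FF M (Suc m) p = hold p * (?g m p 1 + (\<Sum>k<M'. ?g m p (Suc (Suc k)))) + hh p / U * SS M m (rf (p+1)) + hh p * q * (\<Sum>k<M'. ?g m (p+1) (Suc k))"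
    unfolding e1 e2 e3 by (simp add: algebra_simps)
  then have "FF M (Suc m) p = hold p * FF M m p + hh p / U * SS M m (rf (p+1)) + hh p * q * (\<Sum>k<M'. ?g m (p+1) (Suc k))"
    unfolding e4 .
  then show ?thesis using e5 by simp
qed

lemma st_t: "p mod (2*n) = t \<Longrightarrow> st p = st t"
  using st_mod[of p] t2 by (metis mod_less)

lemma main_ind: "SS M m p \<le> orig_Kpow n U m (st p) (st t) \<and> FF M m p \<le> orig_Kpow n U m (st p) (st t)"
proof (induction m arbitrary: p)
  case 0
  have b0: "bb 0 p l = (if l = 0 \<and> p mod (2*n) = t then 1 else 0)" for l
    unfolding bb_def by auto
  have "SS M 0 p \<le> (\<Sum>l<M. if l = 0 then (if p mod (2*n) = t then 1 else 0) else 0)"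
    unfolding SS_def b0 by (rule sum_mono) auto
  also have "\<dots> \<le> (if p mod (2*n) = t then 1 else 0)" by (simp add: sum.delta)
  also have "\<dots> \<le> orig_Kpow n U 0 (st p) (st t)" using st_t by simp
  finally have A: "SS M 0 p \<le> orig_Kpow n U 0 (st p) (st t)" .
  have "FF M 0 p = 0" unfolding FF_def cc_def by simp
  then show ?case using A Kpow_nn by simp
next
  case (Suc m)
  let ?P = "\<lambda>x. orig_Kpow n U m (st x) (st t)"
  have one: "hold p * ?P p + hh p * q * ?P (p+1) + hh p / U * ?P (rf (p+1)) \<le> orig_Kpow n U (Suc m) (st p) (st t)"
    by (rule one_step)
  have c1: "0 \<le> hold p" "0 \<le> hh p * q" "0 \<le> hh p / U" using hold_nn hh_nn q_nn U3 by auto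
  have "SS M (Suc m) p \<le> hold p * SS M m p + hh p * q * SS M m (p+1)" by (rule SS_rec)
  also have "\<dots> \<le> hold p * ?P p + hh p * q * ?P (p+1)"
    using Suc.IH c1 by (intro add_mono mult_left_mono) auto
  also have "\<dots> \<le> orig_Kpow n U (Suc m) (st p) (st t)"
    using one c1 Kpow_nn[of m "st (rf (p+1))" "st t"] by (smt (verit) mult_nonneg_nonneg)
  finally have A: "SS M (Suc m) p \<le> orig_Kpow n U (Suc m) (st p) (st t)" .
  have "FF M (Suc m) p \<le> hold p * FF M m p + hh p / U * SS M m (rf (p+1)) + hh p * q * FF M m (p+1)" by (rule FF_rec)
  also have "\<dots> \<le> hold p * ?P p + hh p / U * ?P (rf (p+1)) + hh p * q * ?P (p+1)"
    using Suc.IH c1 by (intro add_mono mult_left_mono) auto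
  also have "\<dots> \<le> orig_Kpow n U (Suc m) (st p) (st t)" using one by simp
  finally show ?case using A by simp
qed

end


lemma binom_ratio:
  "B \<le> D \<Longrightarrow> m \<le> 8 * (D - B) \<Longrightarrow>
   real ((m - B) choose (D - B)) / 2^(m - B) \<ge> (1/4)^B * (real (m choose D) / 2^m)"
proof (induction B arbitrary: m D)
  case 0 then show ?case by simp
next
  case (Suc B)
  show ?case
  proof (cases m)
    case 0
    then have z: "real (m choose D) = 0" using Suc.prems by simp
    show ?thesis unfolding z by simp
  next
    case (Suc m')
    obtain D' where D: "D = Suc D'" using Suc.prems(1) by (cases D) auto
    have h1: "B \<le> D'" "m' \<le> 8 * (D' - B)" using Suc.prems D \<open>m = Suc m'\<close> by auto
    have IH: "real ((m' - B) choose (D' - B)) / 2^(m' - B) \<ge> (1/4)^B * (real (m' choose D') / 2^m')"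
      using Suc.IH[OF h1] .
    have e: "m - Suc B = m' - B" "D - Suc B = D' - B" using D \<open>m = Suc m'\<close> by auto
    have id: "Suc D' * (Suc m' choose Suc D') = Suc m' * (m' choose D')" by (rule Suc_times_binomial)
    have le8: "Suc m' \<le> 8 * Suc D'" using Suc.prems D \<open>m = Suc m'\<close> by simp
    have "real (Suc D') * real (Suc m' choose Suc D') = real (Suc m') * real (m' choose D')"
      using id by (metis of_nat_mult)
    also have "\<dots> \<le> 8 * real (Suc D') * real (m' choose D')"
    proof -
      have "real (Suc m') \<le> real (8 * Suc D')" using le8 by (simp only: of_nat_le_iff)
      then have "real (Suc m') \<le> 8 * real (Suc D')" by simp
      then show ?thesis by (intro mult_right_mono) auto
    qed
    finally have X: "real (Suc D') * real (Suc m' choose Suc D') \<le> real (Suc D') * (8 * real (m' choose D'))"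
      by (simp only: mult_ac)
    have "real (Suc m' choose Suc D') \<le> 8 * real (m' choose D')"
      by (rule mult_left_le_imp_le[OF X]) simp
    then have A: "real (m choose D) / 2^m \<le> 4 * (real (m' choose D') / 2^m')"
      using D \<open>m = Suc m'\<close> by (simp add: field_simps)
    have "(1/4)^(Suc B) * (real (m choose D) / 2^m) \<le> (1/4)^(Suc B) * (4 * (real (m' choose D') / 2^m'))"
      using A by (intro mult_left_mono) auto
    also have "\<dots> = (1/4)^B * (real (m' choose D') / 2^m')" by simp
    also have "\<dots> \<le> real ((m' - B) choose (D' - B)) / 2^(m' - B)" by (rule IH)
    finally show ?thesis unfolding e .
  qed
qed

lemma tail_step: assumes "D \<le> n" "3*n + 2 \<le> m" shows "2 * (m choose D) \<le> m choose Suc D"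
proof -
  have a: "Suc D * (m choose Suc D) = m * ((m - 1) choose D)" by (rule binomial_absorption)
  have b: "(m - D) * (m choose D) = m * ((m - 1) choose D)" by (rule binomial_absorb_comp)
  have "2 * Suc D \<le> m - D" using assms by simp
  then have "2 * Suc D * (m choose D) \<le> (m - D) * (m choose D)" by (rule mult_right_mono) simp
  also have "\<dots> = Suc D * (m choose Suc D)" using a b by simp
  finally have "Suc D * (2 * (m choose D)) \<le> Suc D * (m choose Suc D)" by (simp only: mult.assoc mult.commute mult.left_commute)
  then show ?thesis by (simp only: Suc_mult_le_cancel1)
qed

lemma tail_sum: assumes "j \<le> n" "3*n + 2 \<le> m" shows "(\<Sum>D<j. m choose D) \<le> m choose j"
  using assms(1)
proof (induction j)
  case 0 then show ?case by simp
next
  case (Suc j)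
  have "(\<Sum>D<Suc j. m choose D) = (\<Sum>D<j. m choose D) + (m choose j)" by simp
  also have "\<dots> \<le> 2 * (m choose j)" using Suc by simp
  also have "\<dots> \<le> m choose Suc j" using tail_step[of j n m] Suc.prems assms by simp
  finally show ?case .
qed

lemma tail_bound: assumes "3*n + 2 \<le> m" "n \<ge> 1" shows "6 * (\<Sum>D<n. m choose D) \<le> 2^m"
proof -
  have t1: "(\<Sum>D<n. m choose D) \<le> m choose n" using tail_sum[OF le_refl assms(1)] .
  have t2: "2 * (m choose n) \<le> m choose Suc n" using tail_step[OF le_refl assms(1)] .
  have s1: "m choose (m - n) = m choose n" using binomial_symmetric[of n m] assms(1) by simp
  have s2: "m choose (m - Suc n) = m choose Suc n" using binomial_symmetric[of "Suc n" m] assms(1) by simp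
  have sub: "{n, Suc n, m - Suc n, m - n} \<subseteq> {..m}" using assms by auto
  have "sum (\<lambda>D. m choose D) {n, Suc n, m - Suc n, m - n} \<le> sum (\<lambda>D. m choose D) {..m}"
    by (rule sum_mono2[OF _ sub]) auto
  also have "\<dots> = 2^m" by (rule choose_row_sum)
  finally have "sum (\<lambda>D. m choose D) {n, Suc n, m - Suc n, m - n} \<le> 2^m" .
  moreover have "sum (\<lambda>D. m choose D) {n, Suc n, m - Suc n, m - n} = 2 * (m choose n) + 2 * (m choose Suc n)"
  proof -
    have d: "n \<noteq> Suc n" "n \<noteq> m - Suc n" "n \<noteq> m - n" "Suc n \<noteq> m - Suc n" "Suc n \<noteq> m - n" "m - Suc n \<noteq> m - n"
      using assms by auto
    then show ?thesis using s1 s2 by simp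
  qed
  ultimately show ?thesis using t1 t2 by linarith
qed

lemma parity_sum: assumes "m > 0"
  shows "2 * (\<Sum>D\<le>m. if even (D + s) then real (m choose D) else 0) = 2^m"
proof (cases "even s")
  case True
  have "(\<Sum>D\<le>m. if even (D + s) then real (m choose D) else 0) = (\<Sum>D\<le>m. if even D then real (m choose D) else 0)"
    using True by (intro sum.cong) auto
  then show ?thesis using choose_even_sum[OF assms] by simp
next
  case False
  have "(\<Sum>D\<le>m. if even (D + s) then real (m choose D) else 0) = (\<Sum>D\<le>m. if odd D then real (m choose D) else 0)"
    using False by (intro sum.cong) auto
  then show ?thesis using choose_odd_sum[OF assms] by simp
qed

lemma Dset_sum: assumes "3*n + 2 \<le> m" "n \<ge> 1"
  shows "(\<Sum>D\<in>{D. n \<le> D \<and> D \<le> m \<and> even (D + s)}. real (m choose D)) \<ge> 2^m / 3"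
proof -
  let ?f = "\<lambda>D. if even (D + s) then real (m choose D) else 0"
  have "(\<Sum>D\<le>m. ?f D) = (\<Sum>D\<in>{..<n}. ?f D) + (\<Sum>D\<in>{n..m}. ?f D)"
  proof -
    have "{..m} = {..<n} \<union> {n..m}" using assms by auto
    then show ?thesis by (simp add: sum.union_disjoint ivl_disj_int)
  qed
  moreover have "(\<Sum>D\<in>{..<n}. ?f D) \<le> (\<Sum>D<n. real (m choose D))" by (rule sum_mono) auto
  moreover have "6 * (\<Sum>D<n. real (m choose D)) \<le> 2^m"
  proof -
    have "real (6 * (\<Sum>D<n. m choose D)) \<le> real (2^m)" using tail_bound[OF assms(1,2)] by (simp only: of_nat_le_iff)
    then show ?thesis by (simp add: of_nat_sum)
  qed
  moreover have "(\<Sum>D\<in>{n..m}. ?f D) = (\<Sum>D\<in>{D. n \<le> D \<and> D \<le> m \<and> even (D + s)}. real (m choose D))"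
    by (rule sum.mono_neutral_cong_right) auto
  moreover have "2 * (\<Sum>D\<le>m. ?f D) = 2^m" using parity_sum assms by simp
  ultimately show ?thesis by linarith
qed



context ch begin

lemma exists_k:
  assumes "n \<le> D" "even (D + p + 1 + t)" "t < 2*n"
  shows "\<exists>k. 1 \<le> k \<and> k \<le> n \<and> (rf (p + k) + (D - k)) mod (2*n) = t"
proof -
  define X where "X = int D - int p - 1 - int t"
  have "even X" using assms(2) unfolding X_def by presburger
  then obtain y where y: "X = 2 * y" by (auto elim!: evenE)
  have npos: "(0::int) < int n" using n3 by simp
  define k0 where "k0 = nat (y mod int n)"
  define k where "k = (if k0 = 0 then n else k0)"
  have k0r: "int k0 = y mod int n" unfolding k0_def using npos by simp
  have k0n: "k0 < n" using k0r npos by (metis of_nat_less_iff pos_mod_bound)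
  have k1: "1 \<le> k" "k \<le> n" using k0n n3 unfolding k_def by auto
  have dv: "int n dvd (y - int k)"
  proof (cases "k0 = 0")
    case True
    then have "y mod int n = 0" using k0r by simp
    then have "int n dvd y" by auto
    then show ?thesis unfolding k_def using True by simp
  next
    case False
    then have "int k = y mod int n" unfolding k_def using k0r by simp
    then show ?thesis by (simp add: mod_eq_dvd_iff[symmetric] mod_diff_eq[symmetric])
  qed
  define r where "r = (p + k) mod (2*n)"
  have r: "r < 2*n" "int r = int p + int k - 2 * int n * int ((p + k) div (2*n))"
    unfolding r_def using n3 apply simp
    by (metis add_diff_cancel_left' div_mult_mod_eq of_nat_add of_nat_mult of_nat_numeral mult.commute)
  define V where "V = rf (p + k) + (D - k)"
  have iV: "int V = 2 * int n - 1 - int r + int D - int k"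
    unfolding V_def rf_def r_def[symmetric] using r(1) k1 assms(1) by auto
  have "int V - int t = 2 * int n * (1 + int ((p + k) div (2*n))) + 2 * (y - int k)"
    using iV r(2) y unfolding X_def by (simp add: algebra_simps)
  moreover have "2 * int n dvd 2 * (y - int k)" using dv by (rule mult_dvd_mono[OF dvd_refl])
  ultimately have "2 * int n dvd (int V - int t)" by simp
  then have "int V mod (2 * int n) = int t mod (2 * int n)" by (simp add: mod_eq_dvd_iff)
  then have "int (V mod (2*n)) = int t" using assms(3) by (simp add: zmod_int)
  then show ?thesis using k1 unfolding V_def by (intro exI[of _ k]) simp
qed

end



context cht begin

lemma crude: assumes "2*n \<le> m"
  shows "q^(2*n) / 2^m \<le> orig_Kpow n U m (st p) (st t)"
proof -
  define l0 where "l0 = (t + 2*n - p mod (2*n)) mod (2*n)"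
  have l0: "l0 < 2*n" unfolding l0_def using n3 by simp
  have pmod: "p mod (2*n) < 2*n" using n3 by simp
  have res: "(p + l0) mod (2*n) = t"
  proof -
    have "(p + l0) mod (2*n) = (p mod (2*n) + (t + 2*n - p mod (2*n))) mod (2*n)"
      unfolding l0_def by (simp add: mod_add_left_eq mod_add_right_eq)
    also have "p mod (2*n) + (t + 2*n - p mod (2*n)) = t + 2*n" using pmod by simp
    finally show ?thesis using t2 by simp
  qed
  define B where "B = beta p l0"
  have Bl: "B \<le> l0" unfolding B_def by (rule beta_le)
  have lm: "l0 \<le> m" using l0 assms by simp
  have bbv: "bb m p l0 = q^l0 * (real ((m - B) choose (l0 - B)) / 2^(m - B))"
    unfolding bb_def B_def[symmetric] using lm res by simp
  have "0 < (m - B) choose (l0 - B)" using Bl lm by (intro zero_less_binomial) simp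
  then have c1: "real ((m - B) choose (l0 - B)) \<ge> 1" by linarith
  have "q^(2*n) \<le> q^l0" using q_nn l0 by (intro power_decreasing) auto
  moreover have "1 / 2^m \<le> real ((m - B) choose (l0 - B)) / 2^(m - B)"
  proof -
    have "(2::real)^(m - B) \<le> 2^m" by (intro power_increasing) auto
    then have "1 / (2::real)^m \<le> 1 / 2^(m-B)" by (intro divide_left_mono) auto
    also have "\<dots> \<le> real ((m - B) choose (l0 - B)) / 2^(m - B)" using c1 by (intro divide_right_mono) auto
    finally show ?thesis .
  qed
  ultimately have "q^(2*n) * (1 / 2^m) \<le> bb m p l0"
    unfolding bbv using q_nn by (intro mult_mono) auto
  also have "bb m p l0 \<le> SS (2*n) m p"
    unfolding SS_def by (rule member_le_sum) (use l0 bb_nn in auto)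
  also have "\<dots> \<le> orig_Kpow n U m (st p) (st t)" using main_ind by blast
  finally show ?thesis by simp
qed

lemma cc_lb:
  assumes n32: "32 \<le> n" and m: "m \<le> 4*n" and k: "1 \<le> k" "k \<le> n" and D: "n \<le> D" "D \<le> m"
    and res: "(rf (p + k) + (D - k)) mod (2*n) = t"
  shows "q^m / U * (1/4)^16 * (real (m choose D) / 2^m) \<le> cc m p k (D - k)"
proof -
  define B where "B = beta p k + beta (rf (p+k)) (D - k)"
  have kD: "k + (D - k) = D" using k D by simp
  have ccv: "cc m p k (D - k) = q^(D - 1) / U * (real ((m - B) choose (D - B)) / 2^(m - B))"
    unfolding cc_def Let_def B_def[symmetric] kD using D res by simp
  have b1: "beta p k \<le> 8" by (rule beta_4n) (use k n32 in simp)
  have b2: "beta (rf (p+k)) (D - k) \<le> 8" by (rule beta_4n) (use D m in simp)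
  have B16: "B \<le> 16" unfolding B_def using b1 b2 by simp
  have BD: "B \<le> D" "m \<le> 8 * (D - B)" using B16 D n32 m by auto
  have r: "(1/4)^B * (real (m choose D) / 2^m) \<le> real ((m - B) choose (D - B)) / 2^(m - B)"
    by (rule binom_ratio[OF BD])
  have "(1/4::real)^16 \<le> (1/4)^B" using B16 by (intro power_decreasing) auto
  then have r2: "(1/4)^16 * (real (m choose D) / 2^m) \<le> real ((m - B) choose (D - B)) / 2^(m - B)"
    using r by (smt (verit) divide_nonneg_nonneg mult_right_mono of_nat_0_le_iff zero_le_power)
  have "q^m \<le> q^(D - 1)" using q_nn D by (intro power_decreasing) auto
  then have "q^m / U \<le> q^(D - 1) / U" using U3 by (intro divide_right_mono) auto
  then have "q^m / U * ((1/4)^16 * (real (m choose D) / 2^m)) \<le> q^(D - 1) / U * (real ((m - B) choose (D - B)) / 2^(m - B))"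
    using r2 q_nn U3 by (intro mult_mono) auto
  then show ?thesis unfolding ccv by (simp add: mult.assoc)
qed

lemma fine: assumes n32: "32 \<le> n" and m: "3*n + 2 \<le> m" "m \<le> 4*n"
  shows "q^m / U * (1/4)^16 / 3 \<le> orig_Kpow n U m (st p) (st t)"
proof -
  define Ds where "Ds = {D. n \<le> D \<and> D \<le> m \<and> even (D + (p + 1 + t))}"
  define kk where "kk D = (SOME k. 1 \<le> k \<and> k \<le> n \<and> (rf (p + k) + (D - k)) mod (2*n) = t)" for D
  have kk: "1 \<le> kk D \<and> kk D \<le> n \<and> (rf (p + kk D) + (D - kk D)) mod (2*n) = t" if "D \<in> Ds" for D
  proof -
    have "\<exists>k. 1 \<le> k \<and> k \<le> n \<and> (rf (p + k) + (D - k)) mod (2*n) = t"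
      using exists_k[of D p t] that t2 unfolding Ds_def by (simp add: add.assoc)
    then show ?thesis unfolding kk_def by (rule someI_ex)
  qed
  define M where "M = Suc m"
  define g where "g x = cc m p (Suc (fst x)) (snd x)" for x
  define phi where "phi D = (kk D - 1, D - kk D)" for D
  have FFe: "FF M m p = sum g ({..<M} \<times> {..<M})"
    unfolding FF_def g_def by (simp add: sum.cartesian_product split_def)
  have inj: "inj_on phi Ds"
  proof
    fix x y assume xy: "x \<in> Ds" "y \<in> Ds" "phi x = phi y"
    have "x = (kk x - 1) + (x - kk x) + 1" using kk[OF xy(1)] xy(1) unfolding Ds_def by auto
    also have "\<dots> = (kk y - 1) + (y - kk y) + 1" using xy(3) unfolding phi_def by simp
    also have "\<dots> = y" using kk[OF xy(2)] xy(2) unfolding Ds_def by auto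
    finally show "x = y" .
  qed
  have sub: "phi ` Ds \<subseteq> {..<M} \<times> {..<M}"
    using kk m n32 unfolding phi_def M_def Ds_def by force
  have "sum (g \<circ> phi) Ds = sum g (phi ` Ds)" by (rule sum.reindex[OF inj, symmetric])
  also have "\<dots> \<le> sum g ({..<M} \<times> {..<M})"
    by (rule sum_mono2[OF _ sub]) (auto simp: g_def intro: cc_nn)
  also have "\<dots> = FF M m p" using FFe by simp
  also have "\<dots> \<le> orig_Kpow n U m (st p) (st t)" using main_ind by blast
  finally have A: "sum (g \<circ> phi) Ds \<le> orig_Kpow n U m (st p) (st t)" .
  have B: "q^m / U * (1/4)^16 * (real (m choose D) / 2^m) \<le> (g \<circ> phi) D" if "D \<in> Ds" for D
  proof -
    have "(g \<circ> phi) D = cc m p (kk D) (D - kk D)"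
      unfolding g_def phi_def using kk[OF that] by simp
    moreover have "q^m / U * (1/4)^16 * (real (m choose D) / 2^m) \<le> cc m p (kk D) (D - kk D)"
      using cc_lb[OF n32 m(2)] kk[OF that] that unfolding Ds_def by auto
    ultimately show ?thesis by simp
  qed
  have "q^m / U * (1/4)^16 / 2^m * (\<Sum>D\<in>Ds. real (m choose D)) = (\<Sum>D\<in>Ds. q^m / U * (1/4)^16 * (real (m choose D) / 2^m))"
    by (simp add: sum_distrib_left)
  also have "\<dots> \<le> sum (g \<circ> phi) Ds" by (rule sum_mono) (use B in auto)
  finally have C: "q^m / U * (1/4)^16 / 2^m * (\<Sum>D\<in>Ds. real (m choose D)) \<le> orig_Kpow n U m (st p) (st t)"
    using A by linarith
  have S: "(\<Sum>D\<in>Ds. real (m choose D)) \<ge> 2^m / 3" unfolding Ds_def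
    by (rule Dset_sum) (use m n32 in auto)
  have pos: "0 \<le> q^m / U * (1/4)^16 / 2^m" using q_nn U3 by simp
  have "q^m / U * (1/4)^16 / 3 = q^m / U * (1/4)^16 / 2^m * (2^m / 3)" by simp
  also have "\<dots> \<le> q^m / U * (1/4)^16 / 2^m * (\<Sum>D\<in>Ds. real (m choose D))"
    using S pos by (rule mult_left_mono)
  finally show ?thesis using C by linarith
qed

end


context ch begin

lemma target_reduce: "tb < 2*n \<Longrightarrow> \<exists>t0 j. t0 < 2*n \<and> \<not> bnd t0 \<and> j \<le> 2 \<and> st (t0 + j) = st tb"
proof -
  assume tb: "tb < 2*n"
  have nb1: "\<not> bnd (n - 2)" using n3 unfolding bnd_def by auto
  have nb2: "\<not> bnd (2*n - 2)" using n3 unfolding bnd_def by auto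
  show ?thesis
  proof (cases "bnd tb")
    case False
    then show ?thesis using tb by (intro exI[of _ tb] exI[of _ 0]) auto
  next
    case True
    then have "tb = 0 \<or> tb = n - 1 \<or> tb = n \<or> tb = 2*n - 1" using tb unfolding bnd_def by auto
    then show ?thesis
    proof (elim disjE)
      assume "tb = 0"
      moreover have "st (2*n - 2 + 2) = st 0"
      proof -
        have "2*n - 2 + 2 = 2*n" using n3 by simp
        then show ?thesis using st_mod[of "2*n"] st_mod[of 0] by simp
      qed
      ultimately have "2*n - 2 < 2*n \<and> \<not> bnd (2*n-2) \<and> (2::nat) \<le> 2 \<and> st (2*n - 2 + 2) = st tb" using nb2 n3
        by auto
      then show ?thesis by blast
    next
      assume "tb = n - 1"
      moreover have "n - 2 + 1 = n - 1" using n3 by simp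
      ultimately have "n - 2 < 2*n \<and> \<not> bnd (n-2) \<and> (1::nat) \<le> 2 \<and> st (n - 2 + 1) = st tb" using nb1 n3
        by simp
      then show ?thesis by blast
    next
      assume "tb = n"
      moreover have "n - 2 + 2 = n" using n3 by simp
      ultimately have "n - 2 < 2*n \<and> \<not> bnd (n-2) \<and> (2::nat) \<le> 2 \<and> st (n - 2 + 2) = st tb" using nb1 n3
        by simp
      then show ?thesis by blast
    next
      assume "tb = 2*n - 1"
      moreover have "2*n - 2 + 1 = 2*n - 1" using n3 by simp
      ultimately have "2*n - 2 < 2*n \<and> \<not> bnd (2*n-2) \<and> (1::nat) \<le> 2 \<and> st (2*n - 2 + 1) = st tb" using nb2 n3
        by simp
      then show ?thesis by blast
    qed
  qed
qed

lemma q_nn2: "0 \<le> q" "q \<le> 1" using U3 unfolding q_def by (auto simp: field_simps)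

lemma q_ge: "q \<ge> 2/3" using U3 unfolding q_def by (auto simp: field_simps)

lemma pred_steps: "x \<in> orig_states n \<Longrightarrow> orig_Kpow n U (m + j) x (st (r + j)) \<ge> orig_Kpow n U m x (st r) * (q/2)^j"
proof (induction j)
  case 0 then show ?case by simp
next
  case (Suc j)
  have "orig_Kpow n U m x (st r) * (q/2)^(Suc j) = (orig_Kpow n U m x (st r) * (q/2)^j) * (q/2)" by simp
  also have "\<dots> \<le> orig_Kpow n U (m + j) x (st (r + j)) * (q/2)"
    using Suc q_nn2 by (intro mult_right_mono) auto
  also have "\<dots> \<le> orig_Kpow n U (m + j) x (st (r + j)) * K (st (r + j)) (st (r + j + 1))"
  proof -
    have "K (st (r + j)) (st (r + j + 1)) = hh (r + j) * q" using K_facts by blast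
    moreover have "q / 2 \<le> hh (r + j) * q" using q_nn2 unfolding hh_def by auto
    ultimately show ?thesis using Kpow_nn by (intro mult_left_mono) auto
  qed
  also have "\<dots> \<le> orig_Kpow n U (m + j + 1) x (st (r + j + 1))"
    by (rule Kpow_step_right) (use Suc.prems st_in U3 in auto)
  finally show ?case by (simp add: add.assoc)
qed

lemma bound_all:
  assumes a: "a \<in> orig_states n" and b: "b \<in> orig_states n"
  shows "orig_Kpow n U (4*n - 1) a b \<ge> 1/9 * (if 32 \<le> n then q^(4*n) / U * (1/4)^16 / 3 else q^(2*n) / 2^(4*n))"
proof -
  obtain p where p: "st p = a" using st_surj[OF a] by blast
  obtain tb where tb: "tb < 2*n" "st tb = b" using st_surj[OF b] by blast
  obtain t0 j where tj: "t0 < 2*n" "\<not> bnd t0" "j \<le> 2" "st (t0 + j) = st tb"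
    using target_reduce[OF tb(1)] by blast
  interpret T: cht n U t0 by unfold_locales (use tj in auto)
  define m where "m = 4*n - 1 - j"
  have mj: "m + j = 4*n - 1" unfolding m_def using tj n3 by simp
  have step: "orig_Kpow n U (4*n - 1) a b \<ge> orig_Kpow n U m a (st t0) * (q/2)^j"
    using pred_steps[OF a, where m=m and j=j and r=t0] unfolding mj tj(4) tb(2) .
  have qj: "(q/2)^j \<ge> 1/9"
  proof -
    have "(1/3::real)^2 \<le> (1/3)^j" using tj(3) by (intro power_decreasing) auto
    also have "\<dots> \<le> (q/2)^j" using q_ge by (intro power_mono) auto
    finally show ?thesis by (simp add: power2_eq_square)
  qed
  have L: "orig_Kpow n U m a (st t0) \<ge> (if 32 \<le> n then q^(4*n) / U * (1/4)^16 / 3 else q^(2*n) / 2^(4*n))"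
  proof (cases "32 \<le> n")
    case True
    have "q^(4*n) / U * (1/4)^16 / 3 \<le> q^m / U * (1/4)^16 / 3"
    proof -
      have "q^(4*n) \<le> q^m" using q_nn2 unfolding m_def by (intro power_decreasing) auto
      then show ?thesis using U3 by (intro divide_right_mono mult_right_mono) auto
    qed
    also have "\<dots> \<le> orig_Kpow n U m a (st t0)"
      using T.fine[of m p] True tj(3) unfolding m_def p by auto
    finally show ?thesis using True by simp
  next
    case False
    have "q^(2*n) / 2^(4*n) \<le> q^(2*n) / 2^m"
      using q_nn2 unfolding m_def by (intro divide_left_mono power_increasing) auto
    also have "\<dots> \<le> orig_Kpow n U m a (st t0)"
      using T.crude[of m p] tj(3) n3 unfolding m_def p by auto
    finally show ?thesis using False by simp
  qed
  have nn: "0 \<le> (if 32 \<le> n then q^(4*n) / U * (1/4)^16 / 3 else q^(2*n) / 2^(4*n))"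
    using q_nn2 U3 by auto
  have "1/9 * (if 32 \<le> n then q^(4*n) / U * (1/4)^16 / 3 else q^(2*n) / 2^(4*n)) \<le> orig_Kpow n U m a (st t0) * (q/2)^j"
    using L qj nn by (subst mult.commute, intro mult_mono) auto
  then show ?thesis using step by linarith
qed

end


lemma qpow_exp:
  fixes U c :: real
  assumes U: "U \<ge> 3" and nc: "real n \<le> c * U"
  shows "(1 - 1/U)^(4*n) \<ge> exp (-8*c)"
proof -
  define x where "x = 1/U"
  have x: "0 \<le> x" "x \<le> 1/2" using U unfolding x_def by (auto simp: field_simps)
  have "- x - 2 * x^2 \<le> ln (1 - x)" by (rule ln_one_minus_pos_lower_bound[OF x])
  moreover have "2 * x^2 \<le> x"
  proof -
    have "x * (2*x) \<le> x * 1" by (rule mult_left_mono) (use x in auto)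
    then show ?thesis by (simp add: power2_eq_square)
  qed
  ultimately have l: "-2 * x \<le> ln (1 - x)" by linarith
  have pos: "0 < 1 - x" using x by simp
  have "(1 - x)^(4*n) = exp (ln (1 - x))^(4*n)" using pos by simp
  also have "\<dots> = exp (real (4*n) * ln (1 - x))" by (rule exp_of_nat_mult[symmetric])
  finally have e: "(1 - x)^(4*n) = exp (real (4*n) * ln (1 - x))" .
  have "-8 * c \<le> real (4*n) * (-2 * x)"
  proof -
    have "real n * x \<le> c" using nc U unfolding x_def by (simp add: field_simps)
    then show ?thesis by simp
  qed
  also have "\<dots> \<le> real (4*n) * ln (1 - x)" using l by (intro mult_left_mono) auto
  finally show ?thesis unfolding e[unfolded x_def] x_def by simp
qed

theorem mainTheorem12:
  fixes c :: real
  assumes "c \<ge> 1"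
  shows "\<exists>c''>0. \<forall>n U :: nat. \<forall>a b.
           n \<ge> 3 \<longrightarrow> U \<ge> 3 \<longrightarrow> real n / c \<le> real U \<longrightarrow> real U \<le> c * real n \<longrightarrow>
           a \<in> orig_states n \<longrightarrow> b \<in> orig_states n \<longrightarrow>
           orig_Kpow n (real U) (4 * n - 1) a b \<ge> 1 / (c'' * real n)"
proof -
  define A where "A = 27 * c * 4^16 * exp (8*c)"
  define Bc :: real where "Bc = 9 * 2^128 * (3/2)^64"
  have Apos: "A > 0" unfolding A_def using assms by simp
  have Bpos: "Bc > 0" unfolding Bc_def by simp
  show ?thesis
  proof (intro exI[of _ "A + Bc"] conjI allI impI)
    show "A + Bc > 0" using Apos Bpos by simp
  next
    fix n U :: nat and a b
    assume n3: "n \<ge> 3" and U3: "U \<ge> 3" and l1: "real n / c \<le> real U" and l2: "real U \<le> c * real n"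
      and a: "a \<in> orig_states n" and b: "b \<in> orig_states n"
    interpret ch n "real U" by unfold_locales (use n3 U3 in auto)
    have bd: "orig_Kpow n U (4*n - 1) a b \<ge> 1/9 * (if 32 \<le> n then q^(4*n) / U * (1/4)^16 / 3 else q^(2*n) / 2^(4*n))"
      by (rule bound_all[OF a b])
    have npos: "real n > 0" using n3 by simp
    have cpos: "c > 0" using assms by simp
    show "orig_Kpow n U (4 * n - 1) a b \<ge> 1 / ((A + Bc) * real n)"
    proof (cases "32 \<le> n")
      case True
      have nc: "real n \<le> c * real U" using l1 cpos by (simp add: field_simps)
      have qe: "q^(4*n) \<ge> exp (-8*c)" unfolding q_def using qpow_exp[of "real U" n c] U3 nc by simp
      have Upos: "real U > 0" using U3 by simp
      have "1 / ((A + Bc) * real n) \<le> 1 / (A * real n)"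
        using Apos Bpos npos by (intro divide_left_mono mult_right_mono) auto
      also have "\<dots> = 1/9 * (exp (-8*c) / (c * real n) * (1/4)^16 / 3)"
        unfolding A_def using cpos npos by (simp add: field_simps exp_minus)
      also have "\<dots> \<le> 1/9 * (q^(4*n) / U * (1/4)^16 / 3)"
      proof -
        have "exp (-8*c) / (c * real n) \<le> q^(4*n) / U"
          using qe l2 Upos cpos npos q_nn2 by (intro frac_le) auto
        then show ?thesis by (intro mult_left_mono divide_right_mono mult_right_mono) auto
      qed
      finally show ?thesis using bd True by simp
    next
      case False
      have q23: "q \<ge> 2/3" using q_ge .
      define w :: real where "w = (3/2)^64"
      define P :: real where "P = 2^128"
      have BcwP: "Bc = 9 * P * w" unfolding Bc_def w_def P_def by simp
      have wpos: "w > 0" "P > 0" unfolding w_def P_def by simp_all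
      have e: "(2/3::real)^64 = 1 / w" unfolding w_def
        using power_one_over[of "3/2::real" 64] by simp
      have "1 / w \<le> q^(2*n)"
      proof -
        have "(2/3::real)^64 \<le> (2/3)^(2*n)" using False by (intro power_decreasing) auto
        also have "\<dots> \<le> q^(2*n)" using q23 by (intro power_mono) auto
        finally show ?thesis using e by simp
      qed
      moreover have "(2::real)^(4*n) \<le> P" unfolding P_def using False by (intro power_increasing) auto
      ultimately have "1 / w / P \<le> q^(2*n) / 2^(4*n)"
        using wpos by (intro frac_le) auto
      moreover have "1 / ((A + Bc) * real n) \<le> 1/9 * (1 / w / P)"
      proof -
        have "(A + Bc) * 1 \<le> (A + Bc) * real n" by (rule mult_left_mono) (use n3 Apos Bpos in auto)
        then have h: "A + Bc \<le> (A + Bc) * real n" by simp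
        have "Bc \<le> (A + Bc) * real n" using h Apos by linarith
        then have "1 / ((A + Bc) * real n) \<le> 1 / Bc" using Bpos by (intro divide_left_mono) auto
        also have "1 / Bc = 1/9 * (1 / w / P)" unfolding BcwP by simp
        finally show ?thesis .
      qed
      ultimately have X: "1 / ((A + Bc) * real n) \<le> 1/9 * (q^(2*n) / 2^(4*n))" by linarith
      have Y: "1/9 * (q^(2*n) / 2^(4*n)) \<le> orig_Kpow n U (4 * n - 1) a b" using bd False by simp
      show ?thesis using X Y by linarith
    qed
  qed
qed


end
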